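(* Let $R$ be a commutative ring and $\mathfrak a$ an ideal of $R$ such that $R$ is complete with respect to some $\mathfrak a$-filtration of $R$. Let $\mathfrak A=\mathfrak aR[[X]]+XR[[X]]$, let $n\ge0$ and $N\ge1$ be integers, and let $f,g\in R[[X]]$ be $\mathfrak a$-distinguished of order $n$ with $f\equiv g\pmod{\mathfrak A^{(n+1)N}}$. Then $P_f\equiv P_g\pmod{\mathfrak A^{N+1}}$ and $U_f\equiv U_g\pmod{\mathfrak A^N}$. Moreover, for each $i\le(n+1)N$ let $\Pi_i\subseteq R$ be a system of representatives for $R/\mathfrak a^i$, and assume $g=f\bmod\mathfrak A^{(n+1)N}$. Let $t=\tau_n(g)^{-1}\bmod\mathfrak A^{(n+1)N-n}$, set $S_0=1$, and for positive integers $i\le N-1$ define recursively $S_i=\tau_n(t\,\alpha_n(g)\,S_{i-1})\bmod\mathfrak A^{(n+1)N-n(i+1)}$. Then $$U_f^{-1}\equiv t\sum_{i=0}^{N-1}(-1)^iS_i\pmod{\mathfrak A^N}\quad\text{and}\quad P_f\equiv g\,t\sum_{i=0}^{N-1}(-1)^iS_i\pmod{\mathfrak A^N}.$$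
   Context: An $\mathfrak a$-filtration is a descending sequence of ideals each containing a power of $\mathfrak a$; $R$ is complete with respect to it if $R\to\varprojlim R/\mathfrak f_i$ is an isomorphism. $f\in R[[X]]$ is $\mathfrak a$-distinguished of order $n$ if $f_i\in\mathfrak a$ for $i<n$ and $f_n$ is a unit modulo $\mathfrak a$ ($f_i$ the coefficient of $X^i$). For such $f$ there are a unique monic polynomial $P_f\in R[X]$ of degree $n$ with non-leading coefficients in $\mathfrak a$ and a unique unit $U_f\in R[[X]]$ with $f=U_fP_f$. Operators: $\tau_n(f)=\sum_{i\ge0}f_{n+i}X^i$ and $\alpha_n(f)=\sum_{i=0}^{n-1}f_iX^i$. For $r\in R$ and $i\le(n+1)N$, $r\bmod\mathfrak a^i$ is the unique element of $\Pi_i$ congruent to $r$ modulo $\mathfrak a^i$; for $h\in R[[X]]$ and $k\le (n+1)N$, $h\bmod\mathfrak A^k=\sum_{i=0}^{k-1}(h_i\bmod\mathfrak a^{k-i})X^i\in R[X]$, a polynomial congruent to $h$ modulo $\mathfrak A^k$. *)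

theory Defs
  imports "HOL-Computational_Algebra.Polynomial_FPS"
begin

definition is_ideal :: "'a::comm_ring_1 set \<Rightarrow> bool" where
  "is_ideal I \<longleftrightarrow> 0 \<in> I \<and> (\<forall>x\<in>I. \<forall>y\<in>I. x + y \<in> I) \<and> (\<forall>r. \<forall>x\<in>I. r * x \<in> I)"

definition ideal_gen :: "'a::comm_ring_1 set \<Rightarrow> 'a set" where
  "ideal_gen S = \<Inter>{I. is_ideal I \<and> S \<subseteq> I}"

definition ideal_prod :: "'a::comm_ring_1 set \<Rightarrow> 'a set \<Rightarrow> 'a set" where
  "ideal_prod I J = ideal_gen {x * y | x y. x \<in> I \<and> y \<in> J}"

definition ideal_sum :: "'a::comm_ring_1 set \<Rightarrow> 'a set \<Rightarrow> 'a set" where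
  "ideal_sum I J = {x + y | x y. x \<in> I \<and> y \<in> J}"

primrec ideal_pow :: "'a::comm_ring_1 set \<Rightarrow> nat \<Rightarrow> 'a set" where
  "ideal_pow I 0 = UNIV"
| "ideal_pow I (Suc k) = ideal_prod I (ideal_pow I k)"

definition cong_mod :: "'a::comm_ring_1 \<Rightarrow> 'a \<Rightarrow> 'a set \<Rightarrow> bool" where
  "cong_mod x y I \<longleftrightarrow> x - y \<in> I"

definition is_adic_filtration :: "'a::comm_ring_1 set \<Rightarrow> (nat \<Rightarrow> 'a set) \<Rightarrow> bool" where
  "is_adic_filtration a F \<longleftrightarrow>
     (\<forall>i. is_ideal (F i)) \<and> (\<forall>i. F (Suc i) \<subseteq> F i) \<and> (\<forall>i. \<exists>k. ideal_pow a k \<subseteq> F i)"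

text \<open>\<open>R \<rightarrow> lim R/F_i\<close> is an isomorphism: injective and surjective onto compatible sequences.\<close>
definition complete_wrt :: "(nat \<Rightarrow> 'a::comm_ring_1 set) \<Rightarrow> bool" where
  "complete_wrt F \<longleftrightarrow>
     (\<forall>r. (\<forall>i. r \<in> F i) \<longrightarrow> r = 0) \<and>
     (\<forall>x :: nat \<Rightarrow> 'a. (\<forall>i j. i \<le> j \<longrightarrow> cong_mod (x j) (x i) (F i)) \<longrightarrow>
        (\<exists>r. \<forall>i. cong_mod r (x i) (F i)))"

definition bigA :: "'a::comm_ring_1 set \<Rightarrow> 'a fps set" where
  "bigA a = ideal_sum (ideal_gen (fps_const ` a)) {fps_X * h | h. True}"

definition distinguished :: "'a::comm_ring_1 set \<Rightarrow> nat \<Rightarrow> 'a fps \<Rightarrow> bool" where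
  "distinguished a n f \<longleftrightarrow> (\<forall>i<n. fps_nth f i \<in> a) \<and> (\<exists>u. fps_nth f n * u - 1 \<in> a)"

definition weierstrass_poly_factor :: "'a::comm_ring_1 set \<Rightarrow> nat \<Rightarrow> 'a poly \<Rightarrow> bool" where
  "weierstrass_poly_factor a n p \<longleftrightarrow> degree p = n \<and> lead_coeff p = 1 \<and> (\<forall>i<n. coeff p i \<in> a)"

definition Pf :: "'a::comm_ring_1 set \<Rightarrow> nat \<Rightarrow> 'a fps \<Rightarrow> 'a poly" where
  "Pf a n f = (THE p. weierstrass_poly_factor a n p \<and> (\<exists>U::'a fps. U dvd 1 \<and> f = U * fps_of_poly p))"

definition Uf :: "'a::comm_ring_1 set \<Rightarrow> nat \<Rightarrow> 'a fps \<Rightarrow> 'a fps" where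
  "Uf a n f = (THE U::'a fps. U dvd 1 \<and> (\<exists>p. weierstrass_poly_factor a n p \<and> f = U * fps_of_poly p))"

definition ring_inv :: "'a::comm_ring_1 \<Rightarrow> 'a" where
  "ring_inv x = (THE y. x * y = 1)"

definition tau :: "nat \<Rightarrow> 'a::comm_ring_1 fps \<Rightarrow> 'a fps" where
  "tau n f = Abs_fps (\<lambda>i. fps_nth f (n + i))"

definition alpha :: "nat \<Rightarrow> 'a::comm_ring_1 fps \<Rightarrow> 'a fps" where
  "alpha n f = Abs_fps (\<lambda>i. if i < n then fps_nth f i else 0)"

definition rep_systems :: "'a::comm_ring_1 set \<Rightarrow> nat \<Rightarrow> (nat \<Rightarrow> 'a set) \<Rightarrow> bool" where
  "rep_systems a m Reps \<longleftrightarrow> (\<forall>i\<le>m. \<forall>r. \<exists>!q. q \<in> Reps i \<and> cong_mod r q (ideal_pow a i))"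

definition rmod :: "'a::comm_ring_1 set \<Rightarrow> (nat \<Rightarrow> 'a set) \<Rightarrow> nat \<Rightarrow> 'a \<Rightarrow> 'a" where
  "rmod a Reps i r = (THE q. q \<in> Reps i \<and> cong_mod r q (ideal_pow a i))"

definition fmod :: "'a::comm_ring_1 set \<Rightarrow> (nat \<Rightarrow> 'a set) \<Rightarrow> nat \<Rightarrow> 'a fps \<Rightarrow> 'a poly" where
  "fmod a Reps k h = (\<Sum>i<k. monom (rmod a Reps (k - i) (fps_nth h i)) i)"

primrec Sseq :: "'a::comm_ring_1 set \<Rightarrow> (nat \<Rightarrow> 'a set) \<Rightarrow> nat \<Rightarrow> nat \<Rightarrow> 'a fps \<Rightarrow> 'a fps \<Rightarrow> nat \<Rightarrow> 'a fps" where
  "Sseq a Reps n N g t 0 = 1"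
| "Sseq a Reps n N g t (Suc i) =
     fps_of_poly (fmod a Reps ((n + 1) * N - n * (Suc i + 1)) (tau n (t * alpha n g * Sseq a Reps n N g t i)))"

end

theory Submission
  imports Defs
begin

unbundle fps_syntax


lemma ideal_0: "is_ideal I \<Longrightarrow> 0 \<in> I" by (simp add: is_ideal_def)
lemma ideal_add: "is_ideal I \<Longrightarrow> x \<in> I \<Longrightarrow> y \<in> I \<Longrightarrow> x + y \<in> I" by (simp add: is_ideal_def)
lemma ideal_mult_left: "is_ideal I \<Longrightarrow> x \<in> I \<Longrightarrow> r * x \<in> I" by (simp add: is_ideal_def)
lemma ideal_mult_right: "is_ideal I \<Longrightarrow> x \<in> I \<Longrightarrow> x * r \<in> I"
  by (metis ideal_mult_left mult.commute)
lemma ideal_uminus: "is_ideal I \<Longrightarrow> x \<in> I \<Longrightarrow> - x \<in> I"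
  using ideal_mult_left[of I x "-1"] by simp
lemma ideal_diff: "is_ideal I \<Longrightarrow> x \<in> I \<Longrightarrow> y \<in> I \<Longrightarrow> x - y \<in> I"
  using ideal_add[of I x "-y"] ideal_uminus[of I y] by simp
lemma ideal_sum: "is_ideal I \<Longrightarrow> (\<And>i. i \<in> A \<Longrightarrow> f i \<in> I) \<Longrightarrow> sum f A \<in> I"
  by (induction A rule: infinite_finite_induct) (auto simp: ideal_0 ideal_add)
lemma ideal_UNIV: "is_ideal UNIV" by (simp add: is_ideal_def)

lemma is_ideal_gen: "is_ideal (ideal_gen S)"
  unfolding ideal_gen_def is_ideal_def by auto
lemma gen_sub: "S \<subseteq> ideal_gen S"
  unfolding ideal_gen_def by (rule Inter_greatest) simp
lemma gen_min: "is_ideal I \<Longrightarrow> S \<subseteq> I \<Longrightarrow> ideal_gen S \<subseteq> I"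
  unfolding ideal_gen_def by (rule Inter_lower) simp

lemma is_ideal_prod: "is_ideal (ideal_prod I J)"
  by (simp add: ideal_prod_def is_ideal_gen)
lemma prod_mem: "x \<in> I \<Longrightarrow> y \<in> J \<Longrightarrow> x * y \<in> ideal_prod I J"
proof -
  assume "x \<in> I" "y \<in> J"
  then have "x * y \<in> {x * y | x y. x \<in> I \<and> y \<in> J}" by blast
  then show ?thesis unfolding ideal_prod_def using gen_sub by (rule subsetD[rotated])
qed
lemma prod_min: "is_ideal K \<Longrightarrow> (\<And>x y. x \<in> I \<Longrightarrow> y \<in> J \<Longrightarrow> x * y \<in> K) \<Longrightarrow> ideal_prod I J \<subseteq> K"
  unfolding ideal_prod_def by (rule gen_min) (assumption, blast)

lemma is_ideal_pow: "is_ideal (ideal_pow I k)"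
proof (cases k)
  case 0 then show ?thesis by (simp add: ideal_UNIV)
next
  case (Suc m) then show ?thesis by (simp only: ideal_pow.simps is_ideal_prod)
qed

lemma pow_Suc_sub: "ideal_pow I (Suc k) \<subseteq> ideal_pow I k"
  by (simp, rule prod_min) (auto simp: is_ideal_pow ideal_mult_left)

lemma pow_antimono: "q \<le> p \<Longrightarrow> ideal_pow I p \<subseteq> ideal_pow I q"
proof (induction p)
  case 0 then show ?case by simp
next
  case (Suc p)
  show ?case
  proof (cases "q \<le> p")
    case True
    then have "ideal_pow I p \<subseteq> ideal_pow I q" by (rule Suc.IH)
    then show ?thesis using pow_Suc_sub[of I p] by (rule order_trans[rotated])
  next
    case False
    then have "q = Suc p" using Suc.prems by simp
    then show ?thesis by simp
  qed
qed

lemma pow_mem_mono: "x \<in> ideal_pow I p \<Longrightarrow> q \<le> p \<Longrightarrow> x \<in> ideal_pow I q"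
  using pow_antimono by blast

lemma pow_one: "is_ideal I \<Longrightarrow> ideal_pow I 1 = I"
proof
  assume "is_ideal I"
  have "ideal_prod I UNIV \<subseteq> I" by (rule prod_min, fact) (simp add: \<open>is_ideal I\<close> ideal_mult_right)
  then show "ideal_pow I 1 \<subseteq> I" by simp
  show "I \<subseteq> ideal_pow I 1" using prod_mem[of _ I 1 UNIV] by auto
qed

lemma pow_mult: "x \<in> ideal_pow I p \<Longrightarrow> y \<in> ideal_pow I q \<Longrightarrow> x * y \<in> ideal_pow I (p + q)"
proof (induction p arbitrary: x y)
  case 0 then show ?case by (simp add: ideal_mult_left is_ideal_pow)
next
  case (Suc p)
  let ?K = "{x. \<forall>y \<in> ideal_pow I q. x * y \<in> ideal_pow I (Suc p + q)}"
  have J: "is_ideal (ideal_pow I (Suc p + q))" by (rule is_ideal_pow)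
  have "is_ideal ?K"
    unfolding is_ideal_def
  proof (intro conjI ballI allI)
    show "0 \<in> ?K" using ideal_0[OF J] by simp
    fix x1 x2 assume "x1 \<in> ?K" "x2 \<in> ?K"
    then show "x1 + x2 \<in> ?K" using ideal_add[OF J] by (simp add: distrib_right)
  next
    fix r x1 assume "x1 \<in> ?K"
    then show "r * x1 \<in> ?K" using ideal_mult_left[OF J] by (simp add: mult.assoc)
  qed
  moreover have "ideal_prod I (ideal_pow I p) \<subseteq> ?K"
  proof (rule prod_min[OF \<open>is_ideal ?K\<close>])
    fix u v assume "u \<in> I" "v \<in> ideal_pow I p"
    show "u * v \<in> ?K"
    proof (rule CollectI, rule ballI)
      fix y assume y: "y \<in> ideal_pow I q"
      have "v * y \<in> ideal_pow I (p + q)" using Suc.IH[OF \<open>v \<in> ideal_pow I p\<close> y] .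
      then have "u * (v * y) \<in> ideal_prod I (ideal_pow I (p + q))" using prod_mem[OF \<open>u \<in> I\<close>] by blast
      then show "u * v * y \<in> ideal_pow I (Suc p + q)" by (simp add: mult.assoc)
    qed
  qed
  moreover have "x \<in> ideal_prod I (ideal_pow I p)" using Suc.prems(1) by simp
  ultimately have "x \<in> ?K" by blast
  then have "\<forall>y \<in> ideal_pow I q. x * y \<in> ideal_pow I (Suc p + q)" by (rule CollectD)
  then show ?case using Suc.prems(2) by (rule bspec)
qed


section \<open>Completeness\<close>

lemma filt_pow: "is_adic_filtration a F \<Longrightarrow> \<exists>k. ideal_pow a k \<subseteq> F i"
  by (simp add: is_adic_filtration_def)

lemma filt_ideal: "is_adic_filtration a F \<Longrightarrow> is_ideal (F i)"
  by (simp add: is_adic_filtration_def)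

lemma compl_zero: "complete_wrt F \<Longrightarrow> (\<And>i. r \<in> F i) \<Longrightarrow> r = 0"
  by (simp add: complete_wrt_def)

lemma zero_pow:
  assumes "is_adic_filtration a F" "complete_wrt F" "\<And>k. r \<in> ideal_pow a k"
  shows "r = 0"
proof (rule compl_zero[OF assms(2)])
  fix i
  obtain k where "ideal_pow a k \<subseteq> F i" using filt_pow[OF assms(1)] by blast
  then show "r \<in> F i" using assms(3) by blast
qed

lemma cauchy_le:
  assumes "\<And>k. x (Suc k) - x k \<in> ideal_pow a k" "i \<le> j"
  shows "x j - x i \<in> ideal_pow a i"
  using assms(2)
proof (induction j)
  case 0 then show ?case by (simp add: ideal_0 is_ideal_pow)
next
  case (Suc j)
  show ?case
  proof (cases "i \<le> j")
    case True
    have "x (Suc j) - x j \<in> ideal_pow a i" using assms(1)[of j] pow_antimono[OF True] by blast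
    moreover have "x j - x i \<in> ideal_pow a i" using Suc.IH[OF True] .
    ultimately have "(x (Suc j) - x j) + (x j - x i) \<in> ideal_pow a i" by (rule ideal_add[OF is_ideal_pow])
    then show ?thesis by simp
  next
    case False
    then have "i = Suc j" using Suc.prems by simp
    then have "x (Suc j) - x i = 0" by simp
    with ideal_0[OF is_ideal_pow[of a i]] show ?thesis by (simp only:)
  qed
qed

lemma limit:
  assumes filt: "is_adic_filtration a F" and compl: "complete_wrt F"
    and cau: "\<And>k. x (Suc k) - x k \<in> ideal_pow a k"
  shows "\<exists>r. \<forall>i. \<exists>K. \<forall>k\<ge>K. r - x k \<in> F i"
proof -
  define \<kappa> where "\<kappa> i = (SOME k. ideal_pow a k \<subseteq> F i)" for i
  have \<kappa>: "ideal_pow a (\<kappa> i) \<subseteq> F i" for i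
    unfolding \<kappa>_def using filt_pow[OF filt] by (rule someI_ex)
  define K where "K i = (\<Sum>l\<le>i. \<kappa> l)" for i
  have Kmono: "K i \<le> K j" if "i \<le> j" for i j
    unfolding K_def using that by (intro sum_mono2) auto
  have Kk: "\<kappa> i \<le> K i" for i
    unfolding K_def by (rule member_le_sum) auto
  have sub: "ideal_pow a (K i) \<subseteq> F i" for i
    using pow_antimono[OF Kk[of i]] \<kappa>[of i] by blast
  define y where "y i = x (K i)" for i
  have "\<forall>i j. i \<le> j \<longrightarrow> cong_mod (y j) (y i) (F i)"
  proof (intro allI impI)
    fix i j :: nat assume "i \<le> j"
    have "x (K j) - x (K i) \<in> ideal_pow a (K i)" by (rule cauchy_le[OF cau Kmono[OF \<open>i \<le> j\<close>]])
    then show "cong_mod (y j) (y i) (F i)" unfolding cong_mod_def y_def using sub by blast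
  qed
  then obtain r where r: "\<And>i. cong_mod r (y i) (F i)" using compl unfolding complete_wrt_def by blast
  show ?thesis
  proof (rule exI[of _ r], rule allI)
    fix i
    show "\<exists>K'. \<forall>k\<ge>K'. r - x k \<in> F i"
    proof (intro exI allI impI)
      fix k assume "K i \<le> k"
      have "x k - x (K i) \<in> ideal_pow a (K i)" by (rule cauchy_le[OF cau \<open>K i \<le> k\<close>])
      then have "x k - x (K i) \<in> F i" using sub by blast
      moreover have "r - x (K i) \<in> F i" using r[of i] by (simp add: cong_mod_def y_def)
      ultimately have "(r - x (K i)) - (x k - x (K i)) \<in> F i" using ideal_diff[OF filt_ideal[OF filt]] by blast
      then show "r - x k \<in> F i" by simp
    qed
  qed
qed

lemma finite_choice_K:
  fixes M :: nat and P :: "nat \<Rightarrow> nat \<Rightarrow> bool"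
  assumes "\<And>j. j \<le> M \<Longrightarrow> \<exists>K. \<forall>k\<ge>K. P j k"
  shows "\<exists>K. \<forall>j\<le>M. \<forall>k\<ge>K. P j k"
  using assms
proof (induction M)
  case 0 then show ?case by auto
next
  case (Suc M)
  obtain K1 where K1: "\<forall>j\<le>M. \<forall>k\<ge>K1. P j k" using Suc by auto
  obtain K2 where K2: "\<forall>k\<ge>K2. P (Suc M) k" using Suc.prems by auto
  show ?case
  proof (intro exI allI impI)
    fix j k assume "j \<le> Suc M" "max K1 K2 \<le> k"
    then show "P j k" using K1 K2 by (cases "j \<le> M") (auto simp: le_Suc_eq)
  qed
qed

section \<open>Coefficient ideals in power series\<close>

definition Bs :: "'a::comm_ring_1 set \<Rightarrow> nat \<Rightarrow> 'a fps set" where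
  "Bs a s = {x. \<forall>j. x $ j \<in> ideal_pow a (s - j)}"

definition Cs :: "'a::comm_ring_1 set \<Rightarrow> nat \<Rightarrow> 'a fps set" where
  "Cs a k = {x. \<forall>j. x $ j \<in> ideal_pow a k}"

lemma BsI: "(\<And>j. x $ j \<in> ideal_pow a (s - j)) \<Longrightarrow> x \<in> Bs a s" by (simp add: Bs_def)
lemma BsD: "x \<in> Bs a s \<Longrightarrow> x $ j \<in> ideal_pow a (s - j)" by (simp add: Bs_def)
lemma CsI: "(\<And>j. x $ j \<in> ideal_pow a k) \<Longrightarrow> x \<in> Cs a k" by (simp add: Cs_def)
lemma CsD: "x \<in> Cs a k \<Longrightarrow> x $ j \<in> ideal_pow a k" by (simp add: Cs_def)

lemma coeff_mult_mem:
  fixes j :: nat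
  assumes "\<And>i. i \<le> j \<Longrightarrow> x $ i * y $ (j - i) \<in> I" "is_ideal I"
  shows "(x * y) $ j \<in> I"
  unfolding fps_mult_nth by (rule ideal_sum[OF assms(2)]) (use assms(1) in auto)

lemma Bs_ideal: "is_ideal (Bs a s)"
  unfolding is_ideal_def
proof (intro conjI ballI allI)
  show "0 \<in> Bs a s" by (rule BsI) (simp add: ideal_0 is_ideal_pow)
  fix x y assume "x \<in> Bs a s" "y \<in> Bs a s"
  then show "x + y \<in> Bs a s" by (intro BsI) (simp add: ideal_add is_ideal_pow BsD)
next
  fix r x assume x: "x \<in> Bs a s"
  show "r * x \<in> Bs a s"
  proof (rule BsI, rule coeff_mult_mem[OF _ is_ideal_pow])
    fix j i :: nat assume "i \<le> j"
    have "x $ (j - i) \<in> ideal_pow a (s - j)" by (rule pow_mem_mono[OF BsD[OF x, of "j - i"]]) (use \<open>i \<le> j\<close> in linarith)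
    then show "r $ i * x $ (j - i) \<in> ideal_pow a (s - j)" by (rule ideal_mult_left[OF is_ideal_pow])
  qed
qed

lemma Cs_ideal: "is_ideal (Cs a k)"
  unfolding is_ideal_def
proof (intro conjI ballI allI)
  show "0 \<in> Cs a k" by (rule CsI) (simp add: ideal_0 is_ideal_pow)
  fix x y assume "x \<in> Cs a k" "y \<in> Cs a k"
  then show "x + y \<in> Cs a k" by (intro CsI) (simp add: ideal_add is_ideal_pow CsD)
next
  fix r x assume x: "x \<in> Cs a k"
  show "r * x \<in> Cs a k"
    by (rule CsI, rule coeff_mult_mem[OF _ is_ideal_pow], rule ideal_mult_left[OF is_ideal_pow], rule CsD[OF x])
qed

lemma Bs_mono: "r \<le> s \<Longrightarrow> Bs a s \<subseteq> Bs a r"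
proof
  fix x assume "r \<le> s" "x \<in> Bs a s"
  show "x \<in> Bs a r"
  proof (rule BsI)
    fix j
    have "r - j \<le> s - j" using \<open>r \<le> s\<close> by simp
    then show "x $ j \<in> ideal_pow a (r - j)" using BsD[OF \<open>x \<in> Bs a s\<close>, of j] pow_antimono by blast
  qed
qed

lemma Bs_mem_mono: "x \<in> Bs a s \<Longrightarrow> r \<le> s \<Longrightarrow> x \<in> Bs a r"
  using Bs_mono by blast

lemma Bs_0: "Bs a 0 = UNIV" by (simp add: Bs_def)
lemma Cs_0: "Cs a 0 = UNIV" by (simp add: Cs_def)

lemma Cs_Bs: "x \<in> Cs a k \<Longrightarrow> x \<in> Bs a k"
  by (rule BsI) (rule pow_mem_mono[OF CsD], auto)

lemma Bs_mult: "x \<in> Bs a s \<Longrightarrow> y \<in> Bs a r \<Longrightarrow> x * y \<in> Bs a (s + r)"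
proof (rule BsI, rule coeff_mult_mem[OF _ is_ideal_pow])
  fix j i :: nat assume x: "x \<in> Bs a s" and y: "y \<in> Bs a r" and "i \<le> j"
  have "x $ i * y $ (j - i) \<in> ideal_pow a ((s - i) + (r - (j - i)))"
    by (rule pow_mult[OF BsD[OF x] BsD[OF y]])
  then show "x $ i * y $ (j - i) \<in> ideal_pow a (s + r - j)"
    by (rule pow_mem_mono) (use \<open>i \<le> j\<close> in linarith)
qed

lemma Cs_mult: "x \<in> Cs a k \<Longrightarrow> y \<in> Cs a m \<Longrightarrow> x * y \<in> Cs a (k + m)"
proof (rule CsI, rule coeff_mult_mem[OF _ is_ideal_pow])
  fix j i :: nat assume x: "x \<in> Cs a k" and y: "y \<in> Cs a m"
  show "x $ i * y $ (j - i) \<in> ideal_pow a (k + m)"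
    by (rule pow_mult[OF CsD[OF x] CsD[OF y]])
qed

lemma Bs_diff: "x \<in> Bs a s \<Longrightarrow> y \<in> Bs a s \<Longrightarrow> x - y \<in> Bs a s"
  by (rule ideal_diff[OF Bs_ideal])
lemma Bs_add: "x \<in> Bs a s \<Longrightarrow> y \<in> Bs a s \<Longrightarrow> x + y \<in> Bs a s"
  by (rule ideal_add[OF Bs_ideal])
lemma Bs_multl: "x \<in> Bs a s \<Longrightarrow> r * x \<in> Bs a s"
  by (rule ideal_mult_left[OF Bs_ideal])
lemma Bs_multr: "x \<in> Bs a s \<Longrightarrow> x * r \<in> Bs a s"
  by (rule ideal_mult_right[OF Bs_ideal])
lemma Bs_uminus: "x \<in> Bs a s \<Longrightarrow> - x \<in> Bs a s"
  by (rule ideal_uminus[OF Bs_ideal])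

lemma tau_nth [simp]: "tau n f $ m = f $ (n + m)"
  by (simp add: tau_def)
lemma alpha_nth [simp]: "alpha n f $ m = (if m < n then f $ m else 0)"
  by (simp add: alpha_def)

lemma tau_diff: "tau n (x - y) = tau n x - tau n y"
  by (rule fps_ext) simp
lemma tau_add: "tau n (x + y) = tau n x + tau n y"
  by (rule fps_ext) simp
lemma tau_uminus: "tau n (- x) = - tau n x"
  by (rule fps_ext) simp
lemma tau_X_power: "tau n (fps_X ^ n * g) = g"
  by (rule fps_ext) (simp add: fps_X_power_mult_nth)
lemma tau_one: "tau 0 f = f" by (rule fps_ext) simp

lemma split_alpha_tau: "f = alpha n f + fps_X ^ n * tau n f"
  by (rule fps_ext) (simp add: fps_X_power_mult_nth)

lemma tau_Bs: "x \<in> Bs a s \<Longrightarrow> tau n x \<in> Bs a (s - n)"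
  by (rule BsI) (simp add: BsD diff_diff_left)

lemma tau_Cs: "x \<in> Cs a k \<Longrightarrow> tau n x \<in> Cs a k"
  by (rule CsI) (simp add: CsD)



section \<open>The ideal A^k\<close>

lemma X_Bs1: "is_ideal a \<Longrightarrow> fps_X \<in> Bs a 1"
proof (rule BsI)
  fix j assume "is_ideal a"
  show "fps_X $ j \<in> ideal_pow a (1 - j)"
  proof (cases j)
    case 0 then show ?thesis by (simp add: ideal_0[OF is_ideal_prod])
  next
    case (Suc i) then show ?thesis by simp
  qed
qed

lemma const_Cs1: "is_ideal a \<Longrightarrow> c \<in> a \<Longrightarrow> fps_const c \<in> Cs a 1"
proof (rule CsI)
  fix j assume "is_ideal a" "c \<in> a"
  then have "fps_const c $ j \<in> a" by (cases j) (simp_all add: ideal_0)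
  then show "fps_const c $ j \<in> ideal_pow a 1" using pow_one[OF \<open>is_ideal a\<close>] by blast
qed

lemma bigA_Bs1:
  assumes "is_ideal a" shows "bigA a \<subseteq> Bs a 1"
proof
  fix z assume "z \<in> bigA a"
  then obtain x h where z: "z = x + fps_X * h" and x: "x \<in> ideal_gen (fps_const ` a)"
    unfolding bigA_def ideal_sum_def by blast
  have "ideal_gen (fps_const ` a) \<subseteq> Cs a 1"
    by (rule gen_min[OF Cs_ideal]) (use const_Cs1[OF assms] in blast)
  then have "x \<in> Bs a 1" using x Cs_Bs by blast
  moreover have "fps_X * h \<in> Bs a 1" by (rule Bs_multr[OF X_Bs1[OF assms]])
  ultimately show "z \<in> Bs a 1" unfolding z by (rule Bs_add)
qed

lemma Apow_sub_Bs:
  assumes "is_ideal a" shows "ideal_pow (bigA a) k \<subseteq> Bs a k"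
proof (induction k)
  case 0 then show ?case by (simp add: Bs_0)
next
  case (Suc k)
  have "ideal_prod (bigA a) (ideal_pow (bigA a) k) \<subseteq> Bs a (1 + k)"
  proof (rule prod_min[OF Bs_ideal])
    fix x y assume "x \<in> bigA a" "y \<in> ideal_pow (bigA a) k"
    then show "x * y \<in> Bs a (1 + k)" using bigA_Bs1[OF assms] Suc.IH by (intro Bs_mult) blast+
  qed
  then show ?case by simp
qed

lemma X_bigA: "fps_X \<in> bigA a"
proof -
  have "(0::'a fps) \<in> ideal_gen (fps_const ` a)" by (rule ideal_0[OF is_ideal_gen])
  then have "0 + fps_X * 1 \<in> bigA a" unfolding bigA_def ideal_sum_def by blast
  then show ?thesis by simp
qed

lemma const_bigA: "c \<in> a \<Longrightarrow> fps_const c \<in> bigA a"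
proof -
  assume "c \<in> a"
  then have "fps_const c \<in> ideal_gen (fps_const ` a)" using gen_sub by blast
  then have "fps_const c + fps_X * 0 \<in> bigA a" unfolding bigA_def ideal_sum_def by blast
  then show ?thesis by simp
qed

lemma X_pow_Apow: "fps_X ^ j \<in> ideal_pow (bigA a) j"
proof (induction j)
  case 0 then show ?case by simp
next
  case (Suc j)
  have "fps_X * fps_X ^ j \<in> ideal_prod (bigA a) (ideal_pow (bigA a) j)"
    by (rule prod_mem[OF X_bigA Suc.IH])
  then show ?case by simp
qed

lemma const_Apow: "c \<in> ideal_pow a m \<Longrightarrow> fps_const c \<in> ideal_pow (bigA a) m"
proof (induction m arbitrary: c)
  case 0 then show ?case by simp
next
  case (Suc m)
  let ?S = "{c. fps_const c \<in> ideal_pow (bigA a) (Suc m)}"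
  have J: "is_ideal (ideal_pow (bigA a) (Suc m))" by (rule is_ideal_pow)
  have "is_ideal ?S"
    unfolding is_ideal_def
  proof (intro conjI ballI allI)
    show "0 \<in> ?S" using ideal_0[OF J] by simp
    fix x1 x2 assume "x1 \<in> ?S" "x2 \<in> ?S"
    have "fps_const (x1 + x2) = fps_const x1 + fps_const x2" by (rule fps_ext) simp
    moreover have "fps_const x1 + fps_const x2 \<in> ideal_pow (bigA a) (Suc m)"
      by (rule ideal_add[OF J]) (use \<open>x1 \<in> ?S\<close> \<open>x2 \<in> ?S\<close> in auto)
    ultimately show "x1 + x2 \<in> ?S" by (simp only: mem_Collect_eq)
  next
    fix r x1 assume "x1 \<in> ?S"
    then show "r * x1 \<in> ?S" using ideal_mult_left[OF J, of "fps_const x1" "fps_const r"]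
      by (simp del: ideal_pow.simps)
  qed
  have "ideal_prod a (ideal_pow a m) \<subseteq> ?S"
  proof (rule prod_min[OF \<open>is_ideal ?S\<close>])
    fix p q assume "p \<in> a" "q \<in> ideal_pow a m"
    have "fps_const p * fps_const q \<in> ideal_prod (bigA a) (ideal_pow (bigA a) m)"
      by (rule prod_mem[OF const_bigA[OF \<open>p \<in> a\<close>] Suc.IH[OF \<open>q \<in> ideal_pow a m\<close>]])
    then show "p * q \<in> ?S" by simp
  qed
  moreover have "c \<in> ideal_prod a (ideal_pow a m)" using Suc.prems by simp
  ultimately show ?case by blast
qed

lemma fps_decomp:
  "h = (\<Sum>j<k. fps_const (h $ j) * fps_X ^ j) + fps_X ^ k * Abs_fps (\<lambda>i. h $ (i + k))"
proof (rule fps_ext)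
  fix m
  have aux: "(\<Sum>j<k. (c j :: 'a) * (if m = j then 1 else 0)) = (if m < k then c m else 0)" for c :: "nat \<Rightarrow> 'a"
    by (induction k) (auto simp: less_Suc_eq)
  have "(\<Sum>j<k. fps_const (h $ j) * fps_X ^ j) $ m = (\<Sum>j<k. h $ j * (if m = j then 1 else 0))"
    by (simp add: fps_sum_nth fps_X_power_nth)
  also have "\<dots> = (if m < k then h $ m else 0)" by (rule aux)
  finally have s: "(\<Sum>j<k. fps_const (h $ j) * fps_X ^ j) $ m = (if m < k then h $ m else 0)" .
  show "h $ m = ((\<Sum>j<k. fps_const (h $ j) * fps_X ^ j) + fps_X ^ k * Abs_fps (\<lambda>i. h $ (i + k))) $ m"
    by (simp only: fps_add_nth s fps_X_power_mult_nth) simp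
qed

lemma Bs_sub_Apow: "Bs a k \<subseteq> ideal_pow (bigA a) k"
proof
  fix h assume h: "h \<in> Bs a k"
  have J: "is_ideal (ideal_pow (bigA a) k)" by (rule is_ideal_pow)
  have "(\<Sum>j<k. fps_const (h $ j) * fps_X ^ j) \<in> ideal_pow (bigA a) k"
  proof (rule ideal_sum[OF J])
    fix j assume "j \<in> {..<k}"
    have "fps_const (h $ j) * fps_X ^ j \<in> ideal_pow (bigA a) ((k - j) + j)"
      by (rule pow_mult[OF const_Apow[OF BsD[OF h]] X_pow_Apow])
    then show "fps_const (h $ j) * fps_X ^ j \<in> ideal_pow (bigA a) k" using \<open>j \<in> {..<k}\<close> by simp
  qed
  moreover have "fps_X ^ k * Abs_fps (\<lambda>i. h $ (i + k)) \<in> ideal_pow (bigA a) k"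
    by (rule ideal_mult_right[OF J X_pow_Apow])
  ultimately show "h \<in> ideal_pow (bigA a) k"
    by (subst fps_decomp[of h k]) (rule ideal_add[OF J])
qed

lemma Apow_eq: "is_ideal a \<Longrightarrow> ideal_pow (bigA a) k = Bs a k"
  using Apow_sub_Bs Bs_sub_Apow by blast



section \<open>Solving contracting linear equations\<close>

lemma lin_facts:
  fixes L :: "'a::comm_ring_1 fps \<Rightarrow> 'a fps"
  assumes lin: "\<And>x y. L (x - y) = L x - L y"
  shows "L 0 = 0" "L (- y) = - L y" "L (x + y) = L x + L y"
proof -
  have "L (0 - 0) = L 0 - L 0" by (rule lin)
  then show L0: "L 0 = 0" by simp
  have Ln: "L (- z) = - L z" for z
  proof -
    have "L (0 - z) = L 0 - L z" by (rule lin)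
    then show ?thesis using L0 by simp
  qed
  then show "L (- y) = - L y" .
  have "L (x - - y) = L x - L (- y)" by (rule lin)
  then show "L (x + y) = L x + L y" using Ln[of y] by simp
qed

lemma lin_sign:
  fixes L :: "'a::comm_ring_1 fps \<Rightarrow> 'a fps"
  assumes lin: "\<And>x y. L (x - y) = L x - L y"
  shows "L ((-1) ^ K * y) = (-1) ^ K * L y"
proof (induction K)
  case 0 then show ?case by simp
next
  case (Suc K)
  have "L ((-1) ^ Suc K * y) = L (- ((-1) ^ K * y))" by simp
  also have "\<dots> = - L ((-1) ^ K * y)" by (rule lin_facts(2)[OF lin])
  finally show ?case using Suc.IH by simp
qed

lemma iter_Cs:
  assumes contr: "\<And>k x. x \<in> Cs a k \<Longrightarrow> L x \<in> Cs a (Suc k)"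
  shows "(L ^^ K) b \<in> Cs a K"
proof (induction K)
  case 0 then show ?case by (simp add: Cs_0)
next
  case (Suc K) then show ?case using contr by simp
qed

lemma neumann:
  fixes L :: "'a::comm_ring_1 fps \<Rightarrow> 'a fps"
  assumes lin: "\<And>x y. L (x - y) = L x - L y"
  shows "(\<Sum>i<K. (-1) ^ i * (L ^^ i) b) + L (\<Sum>i<K. (-1) ^ i * (L ^^ i) b) = b - (-1) ^ K * (L ^^ K) b"
proof (induction K)
  case 0 then show ?case using lin_facts(1)[OF lin] by simp
next
  case (Suc K)
  let ?W = "\<Sum>i<K. (-1) ^ i * (L ^^ i) b"
  let ?t = "(-1) ^ K * (L ^^ K) b"
  have "(\<Sum>i<Suc K. (-1) ^ i * (L ^^ i) b) = ?W + ?t" by simp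
  moreover have "L (?W + ?t) = L ?W + (-1) ^ K * (L ^^ Suc K) b"
    using lin_facts(3)[OF lin] lin_sign[OF lin] by simp
  ultimately show ?case using Suc.IH by (simp add: algebra_simps)
qed

lemma solve:
  fixes L :: "'a::comm_ring_1 fps \<Rightarrow> 'a fps"
  assumes filt: "is_adic_filtration a F" and compl: "complete_wrt F"
    and lin: "\<And>x y. L (x - y) = L x - L y"
    and contr: "\<And>k x. x \<in> Cs a k \<Longrightarrow> L x \<in> Cs a (Suc k)"
    and loc: "\<And>m. \<exists>M. \<forall>I x. is_ideal I \<longrightarrow> (\<forall>j\<le>M. x $ j \<in> I) \<longrightarrow> L x $ m \<in> I"
  shows "\<exists>w. w + L w = b"
proof -
  define W where "W K = (\<Sum>i<K. (-1) ^ i * (L ^^ i) b)" for K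
  have tcs: "(-1) ^ K * (L ^^ K) b \<in> Cs a K" for K
    by (rule ideal_mult_left[OF Cs_ideal iter_Cs[OF contr]])
  have "\<forall>m. \<exists>r. \<forall>i. \<exists>K0. \<forall>K\<ge>K0. r - W K $ m \<in> F i"
  proof
    fix m
    show "\<exists>r. \<forall>i. \<exists>K0. \<forall>K\<ge>K0. r - W K $ m \<in> F i"
    proof (rule limit[OF filt compl])
      fix k
      have "W (Suc k) - W k = (-1) ^ k * (L ^^ k) b" by (simp add: W_def)
      then have "W (Suc k) $ m - W k $ m = ((-1) ^ k * (L ^^ k) b) $ m" by (simp only: fps_sub_nth[symmetric])
      then show "W (Suc k) $ m - W k $ m \<in> ideal_pow a k" using CsD[OF tcs[of k], of m] by (simp only:)
    qed
  qed
  then obtain c where c: "\<And>m i. \<exists>K0. \<forall>K\<ge>K0. c m - W K $ m \<in> F i" by metis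
  define w where "w = Abs_fps c"
  have "w + L w - b = 0"
  proof (rule fps_ext)
    fix m
    show "(w + L w - b) $ m = 0 $ m"
    proof (simp only: fps_zero_nth, rule compl_zero[OF compl])
      fix i
      obtain M where M: "\<forall>I x. is_ideal I \<longrightarrow> (\<forall>j\<le>M. x $ j \<in> I) \<longrightarrow> L x $ m \<in> I"
        using loc by blast
      obtain K1 where K1: "\<forall>j\<le>max m M. \<forall>K\<ge>K1. c j - W K $ j \<in> F i"
        using finite_choice_K[of "max m M" "\<lambda>j K. c j - W K $ j \<in> F i"] c by blast
      obtain \<kappa> where \<kappa>: "ideal_pow a \<kappa> \<subseteq> F i" using filt_pow[OF filt] by blast
      define K where "K = max K1 \<kappa>"
      have FI: "is_ideal (F i)" by (rule filt_ideal[OF filt])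
      have e1: "(w - W K) $ j \<in> F i" if "j \<le> max m M" for j
        using K1 that by (simp add: w_def K_def)
      have e2: "L (w - W K) $ m \<in> F i"
        using M FI e1 by auto
      have e3: "((-1) ^ K * (L ^^ K) b) $ m \<in> F i"
      proof -
        have "((-1) ^ K * (L ^^ K) b) $ m \<in> ideal_pow a K" by (rule CsD[OF tcs])
        moreover have "ideal_pow a K \<subseteq> ideal_pow a \<kappa>" by (rule pow_antimono) (simp add: K_def)
        ultimately show ?thesis using \<kappa> by blast
      qed
      have eq: "w + L w - b = (w - W K) + L (w - W K) - (-1) ^ K * (L ^^ K) b"
      proof -
        have n: "W K + L (W K) = b - (-1) ^ K * (L ^^ K) b"
          unfolding W_def by (rule neumann[OF lin])
        have l: "L (w - W K) = L w - L (W K)" by (rule lin)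
        have l2: "L (W K) = b - (-1) ^ K * (L ^^ K) b - W K" using n by (simp add: algebra_simps)
        show ?thesis unfolding l l2 by (simp add: algebra_simps)
      qed
      have "((w - W K) + L (w - W K) - (-1) ^ K * (L ^^ K) b) $ m \<in> F i"
        using e1[of m] e2 e3 ideal_add[OF FI] ideal_diff[OF FI] by simp
      then show "(w + L w - b) $ m \<in> F i" by (simp only: eq)
    qed
  qed
  then show ?thesis by (intro exI[of _ w]) simp
qed

lemma unit_1_plus:
  fixes x :: "'a::comm_ring_1"
  assumes aI: "is_ideal a" and filt: "is_adic_filtration a F" and compl: "complete_wrt F" and x: "x \<in> a"
  shows "\<exists>y. (1 + x) * y = 1"
proof -
  have "\<exists>w. w + fps_const x * w = 1"
  proof (rule solve[OF filt compl])
    fix u v :: "'a fps" show "fps_const x * (u - v) = fps_const x * u - fps_const x * v"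
      by (simp add: algebra_simps)
  next
    fix k and u :: "'a fps" assume "u \<in> Cs a k"
    then show "fps_const x * u \<in> Cs a (Suc k)"
      by (intro CsI) (simp add: prod_mem[OF x CsD] del: ideal_pow.simps, simp add: prod_mem[OF x CsD])
  next
    fix m
    show "\<exists>M. \<forall>I u. is_ideal I \<longrightarrow> (\<forall>j\<le>M. u $ j \<in> I) \<longrightarrow> (fps_const x * u) $ m \<in> I"
      by (rule exI[of _ m]) (auto intro: ideal_mult_left)
  qed
  then obtain w where "w + fps_const x * w = 1" by blast
  then have "(w + fps_const x * w) $ 0 = 1" by simp
  then have "(1 + x) * w $ 0 = 1" by (simp add: algebra_simps)
  then show ?thesis by blast
qed

lemma unit_mod:
  fixes c :: "'a::comm_ring_1"
  assumes aI: "is_ideal a" and filt: "is_adic_filtration a F" and compl: "complete_wrt F"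
    and cu: "c * u - 1 \<in> a"
  shows "\<exists>d. c * d = 1"
proof -
  obtain y where "(1 + (c * u - 1)) * y = 1" using unit_1_plus[OF aI filt compl cu] by blast
  then have "c * (u * y) = 1" by (simp add: algebra_simps)
  then show ?thesis by blast
qed

lemma fps_unit:
  fixes f :: "'a::comm_ring_1 fps"
  assumes "f $ 0 * d = 1" shows "\<exists>g. f * g = 1"
  using fps_right_inverse[OF assms] by blast



lemma coeff_gt_degree: "degree p < i \<Longrightarrow> coeff p i = 0"
  by (simp add: coeff_eq_0)

lemma wp_beta:
  assumes aI: "is_ideal a" and wp: "weierstrass_poly_factor a n p"
  shows "fps_of_poly p - fps_X ^ n \<in> Cs a 1" "tau n (fps_of_poly p) = 1"
proof -
  have dg: "degree p = n" and lc: "coeff p n = 1" and lo: "\<And>i. i < n \<Longrightarrow> coeff p i \<in> a"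
    using wp unfolding weierstrass_poly_factor_def by auto
  show "fps_of_poly p - fps_X ^ n \<in> Cs a 1"
  proof (rule CsI)
    fix j
    have "(fps_of_poly p - fps_X ^ n) $ j \<in> a"
    proof (cases "j < n")
      case True then show ?thesis using lo[OF True] by simp
    next
      case False
      show ?thesis
      proof (cases "j = n")
        case True then show ?thesis using lc ideal_0[OF aI] by simp
      next
        case False
        with \<open>\<not> j < n\<close> have "n < j" by simp
        then show ?thesis using coeff_gt_degree[of p j] dg ideal_0[OF aI] by simp
      qed
    qed
    then show "(fps_of_poly p - fps_X ^ n) $ j \<in> ideal_pow a 1" using pow_one[OF aI] by blast
  qed
  show "tau n (fps_of_poly p) = 1"
  proof (rule fps_ext)
    fix m
    show "tau n (fps_of_poly p) $ m = 1 $ m"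
    proof (cases m)
      case 0 then show ?thesis using lc by simp
    next
      case (Suc k) then show ?thesis using coeff_gt_degree[of p "n + m"] dg by simp
    qed
  qed
qed

lemma kill:
  assumes filt: "is_adic_filtration a F" and compl: "complete_wrt F"
    and beta: "\<beta> \<in> Cs a 1" and eq: "D = - tau n (D * \<beta>)"
  shows "D = 0"
proof -
  have "D \<in> Cs a k" for k
  proof (induction k)
    case 0 then show ?case by (simp add: Cs_0)
  next
    case (Suc k)
    have "D * \<beta> \<in> Cs a (k + 1)" by (rule Cs_mult[OF Suc.IH beta])
    then have "- tau n (D * \<beta>) \<in> Cs a (Suc k)" by (simp add: tau_Cs ideal_uminus[OF Cs_ideal])
    then show ?case using eq by simp
  qed
  then show ?thesis
    by (intro fps_ext) (simp add: zero_pow[OF filt compl] CsD)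
qed

lemma weier_exists:
  fixes f :: "'a::comm_ring_1 fps"
  assumes aI: "is_ideal a" and filt: "is_adic_filtration a F" and compl: "complete_wrt F"
    and nt: "(1::'a) \<noteq> 0" and dist: "distinguished a n f"
  shows "\<exists>U p. U dvd 1 \<and> weierstrass_poly_factor a n p \<and> f = U * fps_of_poly p"
proof -
  obtain u0 where "f $ n * u0 - 1 \<in> a" using dist unfolding distinguished_def by blast
  then obtain d where d: "f $ n * d = 1" using unit_mod[OF aI filt compl] by blast
  define \<tau> where "\<tau> = tau n f"
  have "\<tau> $ 0 * d = 1" using d by (simp add: \<tau>_def)
  then obtain \<tau>' where \<tau>': "\<tau> * \<tau>' = 1" using fps_unit by blast
  define \<alpha> where "\<alpha> = alpha n f"
  have \<alpha>Cs: "\<alpha> \<in> Cs a 1"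
  proof (rule CsI)
    fix j
    have "\<alpha> $ j \<in> a" using dist ideal_0[OF aI] by (simp add: \<alpha>_def distinguished_def)
    then show "\<alpha> $ j \<in> ideal_pow a 1" using pow_one[OF aI] by blast
  qed
  define L where "L w = tau n (\<tau>' * \<alpha> * w)" for w
  have contr: "L x \<in> Cs a (Suc k)" if "x \<in> Cs a k" for k x
  proof -
    have "\<alpha> * x \<in> Cs a (1 + k)" by (rule Cs_mult[OF \<alpha>Cs that])
    then have "\<tau>' * (\<alpha> * x) \<in> Cs a (Suc k)" by (simp add: ideal_mult_left[OF Cs_ideal])
    then show ?thesis unfolding L_def by (simp add: tau_Cs mult.assoc)
  qed
  have "\<exists>w. w + L w = 1"
  proof (rule solve[OF filt compl])
    fix x y show "L (x - y) = L x - L y" unfolding L_def by (simp add: algebra_simps tau_diff)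
  next
    fix k x assume "x \<in> Cs a k" then show "L x \<in> Cs a (Suc k)" by (rule contr)
  next
    fix m
    show "\<exists>M. \<forall>(I::'a set) (x::'a fps). is_ideal I \<longrightarrow> (\<forall>j\<le>M. x $ j \<in> I) \<longrightarrow> L x $ m \<in> I"
    proof (rule exI[of _ "n + m"], intro allI impI)
      fix I :: "'a set" and x :: "'a fps" assume I: "is_ideal I" and x: "\<forall>j\<le>n + m. x $ j \<in> I"
      have "(\<tau>' * \<alpha> * x) $ (n + m) \<in> I"
        by (rule coeff_mult_mem[OF _ I]) (use x in \<open>auto intro: ideal_mult_left[OF I]\<close>)
      then show "L x $ m \<in> I" by (simp add: L_def)
    qed
  qed
  then obtain w where w: "w + L w = 1" by blast
  define u where "u = \<tau>' * w"
  define pf where "pf = f * u"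
  have fsplit: "f = \<alpha> + fps_X ^ n * \<tau>" unfolding \<alpha>_def \<tau>_def by (rule split_alpha_tau)
  have pf_split: "pf = \<tau>' * \<alpha> * w + fps_X ^ n * w"
  proof -
    have "pf = \<alpha> * u + fps_X ^ n * (\<tau> * u)" unfolding pf_def
      by (subst fsplit) (simp add: algebra_simps)
    moreover have "\<tau> * u = w" unfolding u_def by (simp add: mult.assoc[symmetric] \<tau>')
    moreover have "\<alpha> * u = \<tau>' * \<alpha> * w" unfolding u_def by (simp add: ac_simps)
    ultimately show ?thesis by simp
  qed
  have tau_pf: "tau n pf = 1"
    unfolding pf_split tau_add tau_X_power using w by (simp add: L_def add.commute)
  have pf_hi: "pf $ (n + m) = (1::'a fps) $ m" for m
    using arg_cong[OF tau_pf, of "\<lambda>x. x $ m"] by simp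
  have pf_lo: "pf $ j \<in> a" if "j < n" for j
  proof -
    have "\<tau>' * (\<alpha> * w) \<in> Cs a 1" using ideal_mult_left[OF Cs_ideal Cs_mult[OF \<alpha>Cs, of w 0]] by (simp add: Cs_0)
    then have "(\<tau>' * \<alpha> * w) $ j \<in> a" using CsD pow_one[OF aI] by (metis mult.assoc)
    then show ?thesis using that by (simp add: pf_split fps_X_power_mult_nth)
  qed
  define p where "p = (\<Sum>j<n. monom (pf $ j) j) + monom 1 n"
  have aux: "(\<Sum>j<n. (if j = i then c j else 0)) = (if i < n then c i else (0::'a))" for c :: "nat \<Rightarrow> 'a" and i
    by (induction n) (auto simp: less_Suc_eq)
  have cp: "coeff p i = (if i < n then pf $ i else if i = n then 1 else 0)" for i
    unfolding p_def by (simp add: coeff_sum aux)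
  have Pp: "fps_of_poly p = pf"
  proof (rule fps_ext)
    fix j
    show "fps_of_poly p $ j = pf $ j"
    proof (cases "j < n")
      case True then show ?thesis by (simp add: cp)
    next
      case False
      then obtain m where j: "j = n + m" by (metis le_add_diff_inverse not_less)
      show ?thesis using pf_hi[of m] by (simp add: cp j)
    qed
  qed
  have "coeff p n \<noteq> 0" using nt by (simp add: cp)
  then have "n \<le> degree p" by (rule le_degree)
  moreover have "degree p \<le> n" by (rule degree_le) (simp add: cp)
  ultimately have dg: "degree p = n" by simp
  have wp: "weierstrass_poly_factor a n p"
    unfolding weierstrass_poly_factor_def using dg by (simp add: cp pf_lo)
  have "L w \<in> Cs a 1" using contr[of w 0] by (simp add: Cs_0)
  then have "L w $ 0 \<in> a" using CsD pow_one[OF aI] by blast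
  moreover have "w $ 0 * 1 - 1 = - (L w $ 0)" using arg_cong[OF w, of "\<lambda>x. x $ 0"] by (simp add: algebra_simps)
  ultimately have "w $ 0 * 1 - 1 \<in> a" using ideal_uminus[OF aI] by simp
  then obtain e where "w $ 0 * e = 1" using unit_mod[OF aI filt compl] by blast
  then obtain w' where w': "w * w' = 1" using fps_unit by blast
  define U where "U = \<tau> * w'"
  have Uu: "U * u = 1" unfolding U_def u_def
  proof -
    have "\<tau> * w' * (\<tau>' * w) = (\<tau> * \<tau>') * (w * w')" by (simp add: algebra_simps)
    then show "\<tau> * w' * (\<tau>' * w) = 1" using \<tau>' w' by simp
  qed
  have "f = U * fps_of_poly p"
  proof -
    have "U * fps_of_poly p = f * (U * u)" unfolding Pp pf_def by (simp add: algebra_simps)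
    then show ?thesis using Uu by simp
  qed
  moreover have "U dvd 1" using Uu by (metis dvdI)
  ultimately show ?thesis using wp by blast
qed

lemma weier_unique:
  fixes U U' :: "'a::comm_ring_1 fps"
  assumes aI: "is_ideal a" and filt: "is_adic_filtration a F" and compl: "complete_wrt F"
    and wp: "weierstrass_poly_factor a n p" and wp': "weierstrass_poly_factor a n p'"
    and U: "U dvd 1" and U': "U' dvd 1" and eq: "U * fps_of_poly p = U' * fps_of_poly p'"
  shows "p = p' \<and> U = U'"
proof -
  obtain v where v: "U' * v = 1" using U' by (metis dvdE)
  define P where "P = fps_of_poly p"
  define P' where "P' = fps_of_poly p'"
  define D where "D = v * U - 1"
  have P'eq: "P' = (v * U) * P"
  proof -
    have "(v * U) * P = v * (U' * P')" using eq by (simp add: P_def P'_def mult.assoc)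
    also have "\<dots> = P'" using v by (simp add: mult.assoc[symmetric] mult.commute[of v])
    finally show ?thesis by simp
  qed
  define \<beta> where "\<beta> = P - fps_X ^ n"
  have \<beta>: "\<beta> \<in> Cs a 1" unfolding \<beta>_def P_def by (rule wp_beta(1)[OF aI wp])
  have "tau n (D * P) = 0"
  proof -
    have "D * P = P' - P" using P'eq by (simp add: D_def algebra_simps)
    then show ?thesis using wp_beta(2)[OF aI wp] wp_beta(2)[OF aI wp'] by (simp add: tau_diff P_def P'_def)
  qed
  moreover have "D * P = fps_X ^ n * D + D * \<beta>" by (simp add: \<beta>_def algebra_simps)
  ultimately have "D + tau n (D * \<beta>) = 0" by (simp add: tau_add tau_X_power)
  then have "D = - tau n (D * \<beta>)" by (simp add: eq_neg_iff_add_eq_0)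
  then have "D = 0" by (rule kill[OF filt compl \<beta>])
  then have vU: "v * U = 1" by (simp add: D_def)
  have "U = U'"
  proof -
    have "U = (U' * v) * U" using v by simp
    also have "\<dots> = U'" using vU by (simp add: mult.assoc)
    finally show ?thesis .
  qed
  moreover have "P' = P" using P'eq vU by simp
  then have "p = p'" by (simp add: P_def P'_def fps_of_poly_eq_iff)
  ultimately show ?thesis by simp
qed

lemma Pf_Uf:
  fixes f :: "'a::comm_ring_1 fps"
  assumes aI: "is_ideal a" and filt: "is_adic_filtration a F" and compl: "complete_wrt F"
    and nt: "(1::'a) \<noteq> 0" and dist: "distinguished a n f"
  shows "weierstrass_poly_factor a n (Pf a n f) \<and> Uf a n f dvd 1 \<and> f = Uf a n f * fps_of_poly (Pf a n f)"
proof -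
  obtain U0 p0 where U0: "U0 dvd 1" and p0: "weierstrass_poly_factor a n p0" and f0: "f = U0 * fps_of_poly p0"
    using weier_exists[OF aI filt compl nt dist] by blast
  have "Pf a n f = p0"
    unfolding Pf_def
  proof (rule the_equality)
    show "weierstrass_poly_factor a n p0 \<and> (\<exists>U. U dvd 1 \<and> f = U * fps_of_poly p0)" using U0 p0 f0 by blast
  next
    fix p assume "weierstrass_poly_factor a n p \<and> (\<exists>U. U dvd 1 \<and> f = U * fps_of_poly p)"
    then obtain U where "weierstrass_poly_factor a n p" "U dvd 1" "f = U * fps_of_poly p" by blast
    then show "p = p0" using weier_unique[OF aI filt compl _ p0 _ U0, of p U] f0 by metis
  qed
  moreover have "Uf a n f = U0"
    unfolding Uf_def
  proof (rule the_equality)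
    show "U0 dvd 1 \<and> (\<exists>p. weierstrass_poly_factor a n p \<and> f = U0 * fps_of_poly p)" using U0 p0 f0 by blast
  next
    fix U assume "U dvd 1 \<and> (\<exists>p. weierstrass_poly_factor a n p \<and> f = U * fps_of_poly p)"
    then obtain p where "U dvd 1" "weierstrass_poly_factor a n p" "f = U * fps_of_poly p" by blast
    then show "U = U0" using weier_unique[OF aI filt compl _ p0 _ U0, of p U] f0 by metis
  qed
  ultimately show ?thesis using U0 p0 f0 by simp
qed



lemma ring_inv_eq: "(x::'a::comm_ring_1) * y = 1 \<Longrightarrow> ring_inv x = y"
  unfolding ring_inv_def
proof (rule the_equality)
  fix z assume "x * y = 1" "x * z = 1"
  then have "z = z * (x * y)" by simp
  also have "\<dots> = (x * z) * y" by (simp add: ac_simps)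
  finally show "z = y" using \<open>x * z = 1\<close> by simp
qed

lemma rmod_cong:
  assumes "rep_systems a m Reps" "i \<le> m"
  shows "r - rmod a Reps i r \<in> ideal_pow a i"
proof -
  have "\<exists>!q. q \<in> Reps i \<and> cong_mod r q (ideal_pow a i)" using assms unfolding rep_systems_def by blast
  then have "rmod a Reps i r \<in> Reps i \<and> cong_mod r (rmod a Reps i r) (ideal_pow a i)"
    unfolding rmod_def by (rule theI')
  then show ?thesis by (simp add: cong_mod_def)
qed

lemma fmod_Bs:
  assumes "rep_systems a m Reps" "k \<le> m"
  shows "fps_of_poly (fmod a Reps k h) - h \<in> Bs a k"
proof (rule BsI)
  fix j
  have aux: "(\<Sum>i<k. (if i = j then c i else 0)) = (if j < k then c j else (0::'a))" for c :: "nat \<Rightarrow> 'a"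
    by (induction k) (auto simp: less_Suc_eq)
  have cf: "coeff (fmod a Reps k h) j = (if j < k then rmod a Reps (k - j) (h $ j) else 0)"
    unfolding fmod_def by (simp add: coeff_sum aux)
  show "(fps_of_poly (fmod a Reps k h) - h) $ j \<in> ideal_pow a (k - j)"
  proof (cases "j < k")
    case True
    have "h $ j - rmod a Reps (k - j) (h $ j) \<in> ideal_pow a (k - j)"
      by (rule rmod_cong[OF assms(1)]) (use assms(2) in simp)
    then have "- (h $ j - rmod a Reps (k - j) (h $ j)) \<in> ideal_pow a (k - j)"
      by (rule ideal_uminus[OF is_ideal_pow])
    then show ?thesis using True by (simp add: cf)
  next
    case False then show ?thesis by simp
  qed
qed

lemma iter_lin:
  fixes L :: "'a::comm_ring_1 fps \<Rightarrow> 'a fps"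
  assumes lin: "\<And>x y. L (x - y) = L x - L y"
  shows "(L ^^ K) (x - y) = (L ^^ K) x - (L ^^ K) y"
  by (induction K) (simp_all add: lin)

lemma neumann2:
  fixes L :: "'a::comm_ring_1 fps \<Rightarrow> 'a fps"
  assumes lin: "\<And>x y. L (x - y) = L x - L y" and eq: "x = c - L x"
  shows "x = (\<Sum>i<K. (-1) ^ i * (L ^^ i) c) + (-1) ^ K * (L ^^ K) x"
proof (induction K)
  case 0 then show ?case by simp
next
  case (Suc K)
  have "(L ^^ K) x = (L ^^ K) c - (L ^^ Suc K) x"
  proof -
    have "(L ^^ K) x = (L ^^ K) (c - L x)" using eq by simp
    also have "\<dots> = (L ^^ K) c - (L ^^ K) (L x)" by (rule iter_lin[OF lin])
    also have "(L ^^ K) (L x) = (L ^^ Suc K) x" by (simp add: funpow_swap1)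
    finally show ?thesis .
  qed
  then have "(-1) ^ K * (L ^^ K) x = (-1) ^ K * ((L ^^ K) c - (L ^^ Suc K) x)" by (simp only:)
  also have "\<dots> = (-1) ^ K * (L ^^ K) c + (- ((-1) ^ K)) * (L ^^ Suc K) x"
    by (simp only: right_diff_distrib mult_minus_left) (simp only: diff_conv_add_uminus)
  also have "(- ((-1) ^ K)) = ((-1) ^ Suc K :: 'a fps)" by simp
  finally have "(-1) ^ K * (L ^^ K) x = (-1) ^ K * (L ^^ K) c + (-1) ^ Suc K * (L ^^ Suc K) x" .
  then have "x = (\<Sum>i<K. (-1) ^ i * (L ^^ i) c) + ((-1) ^ K * (L ^^ K) c + (-1) ^ Suc K * (L ^^ Suc K) x)"
    using Suc.IH by simp
  then show ?case by (simp only: sum.lessThan_Suc add.assoc)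
qed

lemma iter_Bs:
  assumes step: "\<And>s x. x \<in> Bs a s \<Longrightarrow> L x \<in> Bs a (s - n)" and c: "c \<in> Bs a s0"
  shows "(L ^^ i) c \<in> Bs a (s0 - n * i)"
proof (induction i)
  case 0 then show ?case using c by simp
next
  case (Suc i)
  have "L ((L ^^ i) c) \<in> Bs a (s0 - n * i - n)" by (rule step[OF Suc.IH])
  moreover have "s0 - n * i - n = s0 - n * Suc i" by simp
  ultimately show ?case by simp
qed

lemma arith1:
  fixes n N i :: nat
  assumes "i < N"
  shows "N \<le> (n + 1) * N - n * (i + 1)"
proof -
  have "n * (i + 1) \<le> n * N" using assms by (intro mult_le_mono2) simp
  moreover have "(n + 1) * N = n * N + N" by simp
  ultimately show ?thesis by linarith
qed



theorem proposition5p1: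
  fixes a :: "'a::comm_ring_1 set" and F :: "nat \<Rightarrow> 'a set"
    and f g :: "'a fps" and n N :: nat
  assumes a_ideal: "is_ideal a"
    and filt: "is_adic_filtration a F" and compl: "complete_wrt F"
    and N_pos: "N \<ge> 1"
    and f_dist: "distinguished a n f" and g_dist: "distinguished a n g"
    and fg: "cong_mod f g (ideal_pow (bigA a) ((n + 1) * N))"
  shows "cong_mod (fps_of_poly (Pf a n f)) (fps_of_poly (Pf a n g)) (ideal_pow (bigA a) (N + 1))
       \<and> cong_mod (Uf a n f) (Uf a n g) (ideal_pow (bigA a) N)
       \<and> (\<forall>Reps. rep_systems a ((n + 1) * N) Reps \<longrightarrow>
            g = fps_of_poly (fmod a Reps ((n + 1) * N) f) \<longrightarrow>
            (let t = fps_of_poly (fmod a Reps ((n + 1) * N - n) (ring_inv (tau n g)));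
                 T = t * (\<Sum>i<N. (-1) ^ i * Sseq a Reps n N g t i)
             in cong_mod (ring_inv (Uf a n f)) T (ideal_pow (bigA a) N)
              \<and> cong_mod (fps_of_poly (Pf a n f)) (g * T) (ideal_pow (bigA a) N)))"
proof (cases "(1::'a) = 0")
  case True
  have z: "x = (0::'a fps)" for x
  proof (rule fps_ext)
    fix j
    have "x $ j = x $ j * 1" by simp
    also have "\<dots> = 0" using True by simp
    finally show "x $ j = 0 $ j" by simp
  qed
  have triv: "cong_mod x y (ideal_pow (bigA a) k)" for x y :: "'a fps" and k
    unfolding cong_mod_def using z[of "x - y"] ideal_0[OF is_ideal_pow] by simp
  show ?thesis by (simp del: ideal_pow.simps add: triv Let_def)
next
  case False
  then have nt: "(1::'a) \<noteq> 0" by simp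
  define M where "M = (n + 1) * N"
  have Meq: "(n + 1) * N = M" by (simp add: M_def)
  have Aeq: "\<And>k. ideal_pow (bigA a) k = Bs a k" using Apow_eq[OF a_ideal] by blast
  define PF where "PF = fps_of_poly (Pf a n f)"
  define PG where "PG = fps_of_poly (Pf a n g)"
  define UF where "UF = Uf a n f"
  define UG where "UG = Uf a n g"
  have wpF: "weierstrass_poly_factor a n (Pf a n f)" and UFu: "UF dvd 1" and fF: "f = UF * PF"
    using Pf_Uf[OF a_ideal filt compl nt f_dist] by (auto simp: UF_def PF_def)
  have wpG: "weierstrass_poly_factor a n (Pf a n g)" and UGu: "UG dvd 1" and gG: "g = UG * PG"
    using Pf_Uf[OF a_ideal filt compl nt g_dist] by (auto simp: UG_def PG_def)
  obtain uf where ufF: "UF * uf = 1" using UFu by (metis dvdE)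
  obtain ug where ugG: "UG * ug = 1" using UGu by (metis dvdE)
  have hM: "f - g \<in> Bs a M" using fg unfolding cong_mod_def Aeq Meq .
  have NM: "N \<le> M - n" using arith1[of 0 N n] N_pos by (simp add: M_def)
  have hN: "f - g \<in> Bs a N" by (rule Bs_mem_mono[OF hM]) (use NM in linarith)
  define D where "D = uf * UG - 1"
  define \<beta> where "\<beta> = PG - fps_X ^ n"
  have \<beta>: "\<beta> \<in> Cs a 1" unfolding \<beta>_def PG_def by (rule wp_beta(1)[OF a_ideal wpG])
  have e1: "uf * f = PF"
  proof -
    have "uf * f = (UF * uf) * PF" by (simp add: fF ac_simps)
    then show ?thesis using ufF by simp
  qed
  have key: "PF - PG = D * PG + uf * (f - g)"
  proof -
    have "D * PG + uf * (f - g) = uf * (UG * PG) - PG + uf * f - uf * g" by (simp add: D_def algebra_simps)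
    also have "\<dots> = PF - PG" using e1 gG by simp
    finally show ?thesis by simp
  qed
  define L' where "L' x = tau n (x * \<beta>)" for x
  have lin': "L' (x - y) = L' x - L' y" for x y by (simp add: L'_def algebra_simps tau_diff)
  define c where "c = - tau n (uf * (f - g))"
  have Deq: "D = c - L' D"
  proof -
    have "tau n (PF - PG) = 0"
      using wp_beta(2)[OF a_ideal wpF] wp_beta(2)[OF a_ideal wpG] by (simp add: tau_diff PF_def PG_def)
    moreover have "PF - PG = fps_X ^ n * D + D * \<beta> + uf * (f - g)" using key by (simp add: \<beta>_def algebra_simps)
    ultimately have "D + L' D - c = 0" by (simp add: tau_add tau_X_power L'_def c_def)
    then show ?thesis by (simp add: algebra_simps)
  qed
  have DN: "D \<in> Bs a N"
  proof -
    have decomp: "D = (\<Sum>i<N. (-1) ^ i * (L' ^^ i) c) + (-1) ^ N * (L' ^^ N) D"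
      by (rule neumann2[OF lin' Deq])
    have cB: "c \<in> Bs a (M - n)" unfolding c_def by (intro Bs_uminus tau_Bs Bs_multl hM)
    have stepB: "L' x \<in> Bs a (s - n)" if "x \<in> Bs a s" for s x
      unfolding L'_def by (intro tau_Bs Bs_multr that)
    have t1: "(\<Sum>i<N. (-1) ^ i * (L' ^^ i) c) \<in> Bs a N"
    proof (rule ideal_sum[OF Bs_ideal])
      fix i assume "i \<in> {..<N}"
      then have iN: "i < N" by simp
      have "(L' ^^ i) c \<in> Bs a (M - n - n * i)" by (rule iter_Bs[OF stepB cB])
      moreover have "N \<le> M - n - n * i" using arith1[OF iN, of n] by (simp add: M_def diff_diff_left algebra_simps)
      ultimately have "(L' ^^ i) c \<in> Bs a N" by (rule Bs_mem_mono)
      then show "(-1) ^ i * (L' ^^ i) c \<in> Bs a N" by (rule Bs_multl)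
    qed
    have contr': "L' x \<in> Cs a (Suc k)" if "x \<in> Cs a k" for k x
    proof -
      have "x * \<beta> \<in> Cs a (k + 1)" by (rule Cs_mult[OF that \<beta>])
      then show ?thesis unfolding L'_def by (simp add: tau_Cs)
    qed
    have "(L' ^^ N) D \<in> Cs a N" by (rule iter_Cs[OF contr'])
    then have t2: "(-1) ^ N * (L' ^^ N) D \<in> Bs a N" by (intro Bs_multl Cs_Bs)
    show ?thesis by (subst decomp) (rule Bs_add[OF t1 t2])
  qed
  have c2: "UF - UG \<in> Bs a N"
  proof -
    have "UF * D = (UF * uf) * UG - UF" by (simp add: D_def algebra_simps)
    then have "UF * D = UG - UF" using ufF by simp
    then have "UF - UG = - (UF * D)" by simp
    then show ?thesis using Bs_uminus[OF Bs_multl[OF DN]] by simp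
  qed
  have c1: "PF - PG \<in> Bs a (N + 1)"
  proof (cases "n = 0")
    case True
    have "PF = 1" using wp_beta(2)[OF a_ideal wpF] True by (simp add: PF_def tau_one)
    moreover have "PG = 1" using wp_beta(2)[OF a_ideal wpG] True by (simp add: PG_def tau_one)
    ultimately show ?thesis using ideal_0[OF Bs_ideal] by simp
  next
    case False
    have "fps_X * fps_X ^ (n - 1) \<in> Bs a 1" by (rule Bs_multr[OF X_Bs1[OF a_ideal]])
    moreover have "fps_X ^ n = (fps_X * fps_X ^ (n - 1) :: 'a fps)" using False by (cases n) simp_all
    ultimately have Xn: "fps_X ^ n \<in> Bs a 1" by (simp only:)
    have PGe: "PG = fps_X ^ n + \<beta>" by (simp add: \<beta>_def)
    have PG1: "PG \<in> Bs a 1" unfolding PGe by (rule Bs_add[OF Xn Cs_Bs[OF \<beta>]])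
    have "D * PG \<in> Bs a (N + 1)" by (rule Bs_mult[OF DN PG1])
    moreover have "uf * (f - g) \<in> Bs a (N + 1)"
    proof -
      have "N \<le> n * N" using False by simp
      then have "N + 1 \<le> M" using N_pos by (simp add: M_def)
      then show ?thesis using Bs_mem_mono[OF Bs_multl[OF hM]] by blast
    qed
    ultimately show ?thesis unfolding key by (rule Bs_add)
  qed
  show ?thesis
  proof (intro conjI allI impI)
    show "cong_mod (fps_of_poly (Pf a n f)) (fps_of_poly (Pf a n g)) (ideal_pow (bigA a) (N + 1))"
      using c1 unfolding cong_mod_def Aeq PF_def PG_def .
    show "cong_mod (Uf a n f) (Uf a n g) (ideal_pow (bigA a) N)"
      using c2 unfolding cong_mod_def Aeq UF_def UG_def .
  next
    fix Reps assume reps0: "rep_systems a ((n + 1) * N) Reps"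
    then have reps: "rep_systems a M Reps" unfolding Meq .
    define \<tau>g where "\<tau>g = tau n g"
    obtain u0 where "g $ n * u0 - 1 \<in> a" using g_dist unfolding distinguished_def by blast
    then obtain d where d: "g $ n * d = 1" using unit_mod[OF a_ideal filt compl] by blast
    have "\<tau>g $ 0 * d = 1" using d by (simp add: \<tau>g_def)
    then obtain \<tau>' where \<tau>': "\<tau>g * \<tau>' = 1" using fps_unit by blast
    have ri: "ring_inv \<tau>g = \<tau>'" by (rule ring_inv_eq[OF \<tau>'])
    define t where "t = fps_of_poly (fmod a Reps (M - n) (ring_inv \<tau>g))"
    have tdiff: "t - \<tau>' \<in> Bs a (M - n)" unfolding t_def ri by (rule fmod_Bs[OF reps]) simp
    define \<alpha> where "\<alpha> = alpha n g"
    have \<alpha>Cs: "\<alpha> \<in> Cs a 1"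
    proof (rule CsI)
      fix j
      have "\<alpha> $ j \<in> a" using g_dist ideal_0[OF a_ideal] by (simp add: \<alpha>_def distinguished_def)
      then show "\<alpha> $ j \<in> ideal_pow a 1" using pow_one[OF a_ideal] by blast
    qed
    define L where "L x = tau n (\<tau>' * \<alpha> * x)" for x
    have lin: "L (x - y) = L x - L y" for x y by (simp add: L_def algebra_simps tau_diff)
    have contr: "L x \<in> Cs a (Suc k)" if "x \<in> Cs a k" for k x
    proof -
      have "\<alpha> * x \<in> Cs a (1 + k)" by (rule Cs_mult[OF \<alpha>Cs that])
      then have "\<tau>' * (\<alpha> * x) \<in> Cs a (Suc k)" by (simp add: ideal_mult_left[OF Cs_ideal])
      then show ?thesis unfolding L_def by (simp add: tau_Cs mult.assoc)
    qed
    define S where "S i = Sseq a Reps n N g t i" for i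
    have Sstep: "S (Suc i) - tau n (t * \<alpha> * S i) \<in> Bs a (M - n * (Suc i + 1))" for i
      unfolding S_def Sseq.simps(2) \<alpha>_def Meq by (rule fmod_Bs[OF reps]) simp
    have Sclose: "S i - (L ^^ i) 1 \<in> Bs a (M - n * (i + 1))" for i
    proof (induction i)
      case 0 then show ?case by (simp add: S_def ideal_0[OF Bs_ideal])
    next
      case (Suc i)
      have i1: "tau n ((t - \<tau>') * \<alpha> * S i) = tau n (t * \<alpha> * S i) - tau n (\<tau>' * \<alpha> * S i)"
        by (simp add: algebra_simps tau_diff)
      have i2: "tau n (\<tau>' * \<alpha> * (S i - (L ^^ i) 1)) = tau n (\<tau>' * \<alpha> * S i) - (L ^^ Suc i) 1"
        by (simp add: algebra_simps tau_diff L_def)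
      have eq: "S (Suc i) - (L ^^ Suc i) 1 = (S (Suc i) - tau n (t * \<alpha> * S i))
          + tau n ((t - \<tau>') * \<alpha> * S i) + tau n (\<tau>' * \<alpha> * (S i - (L ^^ i) 1))"
        unfolding i1 i2 by simp
      have p2: "tau n ((t - \<tau>') * \<alpha> * S i) \<in> Bs a (M - n * (Suc i + 1))"
      proof -
        have "tau n ((t - \<tau>') * \<alpha> * S i) \<in> Bs a (M - n - n)" by (intro tau_Bs Bs_multr tdiff)
        moreover have "M - n * (Suc i + 1) \<le> M - n - n"
        proof -
          have "n + n \<le> n * (Suc i + 1)" by simp
          then show ?thesis by (simp add: diff_le_mono2 diff_diff_left)
        qed
        ultimately show ?thesis by (rule Bs_mem_mono)
      qed
      have p3: "tau n (\<tau>' * \<alpha> * (S i - (L ^^ i) 1)) \<in> Bs a (M - n * (Suc i + 1))"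
      proof -
        have "tau n (\<tau>' * \<alpha> * (S i - (L ^^ i) 1)) \<in> Bs a (M - n * (i + 1) - n)"
          by (intro tau_Bs Bs_multl Suc.IH)
        moreover have "M - n * (i + 1) - n = M - n * (Suc i + 1)" by (simp add: diff_diff_left algebra_simps)
        ultimately show ?thesis by simp
      qed
      show ?case unfolding eq by (intro Bs_add Sstep p2 p3)
    qed
    define w where "w = ug * \<tau>g"
    have ugw: "ug = \<tau>' * w"
    proof -
      have "\<tau>' * w = ug * (\<tau>g * \<tau>')" by (simp add: w_def ac_simps)
      then show ?thesis using \<tau>' by simp
    qed
    have weq: "w = 1 - L w"
    proof -
      have "ug * g = PG"
      proof -
        have "ug * g = (UG * ug) * PG" by (simp add: gG ac_simps)
        then show ?thesis using ugG by simp
      qed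
      moreover have "g = \<alpha> + fps_X ^ n * \<tau>g" unfolding \<alpha>_def \<tau>g_def by (rule split_alpha_tau)
      ultimately have "PG = ug * \<alpha> + fps_X ^ n * w" by (simp add: w_def algebra_simps)
      then have "tau n (ug * \<alpha>) + w = 1"
        using wp_beta(2)[OF a_ideal wpG] by (simp add: PG_def[symmetric] tau_add tau_X_power)
      moreover have "tau n (ug * \<alpha>) = L w" by (simp add: L_def ugw ac_simps)
      ultimately show ?thesis by (simp add: algebra_simps)
    qed
    have wdec: "w = (\<Sum>i<N. (-1) ^ i * (L ^^ i) 1) + (-1) ^ N * (L ^^ N) w"
      by (rule neumann2[OF lin weq])
    define SS where "SS = (\<Sum>i<N. (-1) ^ i * S i)"
    define SL where "SL = (\<Sum>i<N. (-1) ^ i * (L ^^ i) 1)"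
    define T where "T = t * SS"
    have SSL: "SS - SL \<in> Bs a N"
    proof -
      have "SS - SL = (\<Sum>i<N. (-1) ^ i * (S i - (L ^^ i) 1))"
        unfolding SS_def SL_def by (simp add: sum_subtractf right_diff_distrib)
      also have "\<dots> \<in> Bs a N"
      proof (rule ideal_sum[OF Bs_ideal])
        fix i assume "i \<in> {..<N}"
        then have "N \<le> M - n * (i + 1)" using arith1[of i N n] by (simp add: M_def)
        then show "(-1) ^ i * (S i - (L ^^ i) 1) \<in> Bs a N"
          by (intro Bs_multl Bs_mem_mono[OF Sclose])
      qed
      finally show ?thesis .
    qed
    have Tug: "T - ug \<in> Bs a N"
    proof -
      define R where "R = (-1) ^ N * (L ^^ N) w"
      have "\<tau>' * w = \<tau>' * (SL + R)" using wdec unfolding SL_def[symmetric] R_def[symmetric] by (rule arg_cong)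
      then have ug2: "ug = \<tau>' * (SL + R)" using ugw by simp
      have "T - ug = (t - \<tau>') * SS + \<tau>' * (SS - SL) - \<tau>' * R"
        unfolding T_def ug2 by (simp add: algebra_simps)
      then have "T - ug = (t - \<tau>') * SS + \<tau>' * (SS - SL) - \<tau>' * ((-1) ^ N * (L ^^ N) w)"
        by (simp add: R_def)
      moreover have "(t - \<tau>') * SS \<in> Bs a N" by (intro Bs_multr Bs_mem_mono[OF tdiff NM])
      moreover have "\<tau>' * (SS - SL) \<in> Bs a N" by (intro Bs_multl SSL)
      moreover have "\<tau>' * ((-1) ^ N * (L ^^ N) w) \<in> Bs a N"
        by (intro Bs_multl Cs_Bs iter_Cs[OF contr])
      ultimately show ?thesis by (simp only:) (intro Bs_add Bs_diff)
    qed
    have ufug: "uf - ug \<in> Bs a N"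
    proof -
      have "uf * ug * (UG - UF) = uf * (UG * ug) - ug * (UF * uf)" by (simp add: algebra_simps)
      also have "\<dots> = uf - ug" using ufF ugG by simp
      finally have "uf - ug = - ((uf * ug) * (UF - UG))" by (simp add: algebra_simps)
      then show ?thesis using Bs_uminus[OF Bs_multl[OF c2]] by simp
    qed
    have riF: "ring_inv (Uf a n f) = uf" unfolding UF_def[symmetric] by (rule ring_inv_eq[OF ufF])
    have G1: "uf - T \<in> Bs a N"
    proof -
      have "uf - T = (uf - ug) - (T - ug)" by simp
      then show ?thesis using Bs_diff[OF ufug Tug] by simp
    qed
    have G2: "PF - g * T \<in> Bs a N"
    proof -
      have "PF - g * T = uf * (f - g) + g * (uf - T)" using e1 by (simp add: algebra_simps)
      then show ?thesis using Bs_add[OF Bs_multl[OF hN] Bs_multl[OF G1]] by simp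
    qed
    assume "g = fps_of_poly (fmod a Reps ((n + 1) * N) f)"
    show "let t = fps_of_poly (fmod a Reps ((n + 1) * N - n) (ring_inv (tau n g)));
                 T = t * (\<Sum>i<N. (-1) ^ i * Sseq a Reps n N g t i)
             in cong_mod (ring_inv (Uf a n f)) T (ideal_pow (bigA a) N)
              \<and> cong_mod (fps_of_poly (Pf a n f)) (g * T) (ideal_pow (bigA a) N)"
      unfolding Let_def Meq Aeq cong_mod_def riF PF_def[symmetric]
      using G1 G2 by (simp add: T_def SS_def S_def t_def \<tau>g_def)
  qed
qed


end
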